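(* Let $\sigma_0,\sigma_\epsilon>0$ with $\sigma_0\neq\sigma_\epsilon$, $\theta_0\in\mathbb{R}$, prior $\Theta\sim\mathrm{Laplace}(\theta_0,\sigma_0)$, signal $X=\Theta+\epsilon$ with $\epsilon\sim\mathrm{Laplace}(0,\sigma_\epsilon)$ independent of $\Theta$, and let $\theta_1(x)=\mathbb{E}[\Theta\mid X=x]$. Put $x_0=x-\theta_0$ and $x^*=\frac{2/\sigma_0}{1/\sigma_\epsilon^2-1/\sigma_0^2}$. Then as $|x_0|\to\infty$: (i) if $\sigma_0>\sigma_\epsilon$, $\theta_1(x)-\bigl(x-\operatorname{sgn}(x_0)x^*\bigr)\to0$, i.e. $\theta_1-\theta_0\approx x_0-\operatorname{sgn}(x_0)x^*$; (ii) if $\sigma_0<\sigma_\epsilon$, $\theta_1(x)-\theta_0\to-\operatorname{sgn}(x_0)\frac{\sigma_0}{\sigma_\epsilon}x^*$ (a bounded shift).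
   Context: $\mathrm{Laplace}(\mu,s)$ has density $t\mapsto\frac{1}{2s}e^{-|t-\mu|/s}$. The posterior mean is $\theta_1(x)=\frac{\int\theta f_\Theta(\theta)l_\epsilon(x-\theta)d\theta}{\int f_\Theta(\theta)l_\epsilon(x-\theta)d\theta}$. *)

theory Defs
  imports "HOL-Analysis.Analysis"
begin

definition laplace_density :: "real \<Rightarrow> real \<Rightarrow> real \<Rightarrow> real" where
  "laplace_density mu s t = exp (- \<bar>t - mu\<bar> / s) / (2 * s)"

definition posterior_mean :: "real \<Rightarrow> real \<Rightarrow> real \<Rightarrow> real \<Rightarrow> real" where
  "posterior_mean theta0 sigma0 sigmae x =
     (LINT theta|lborel. theta * laplace_density theta0 sigma0 theta * laplace_density 0 sigmae (x - theta))
   / (LINT theta|lborel. laplace_density theta0 sigma0 theta * laplace_density 0 sigmae (x - theta))"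

end

theory Submission imports Defs "HOL-Real_Asymp.Real_Asymp" begin

lemma P1: fixes k::real assumes k: "k>0"
  shows "integrable lborel (\<lambda>u. indicator {..<0} u * exp (k*u))"
    "(\<integral>u. indicator {..<0} u * exp (k*u) \<partial>lborel) = 1/k"
proof -
  let ?F = "\<lambda>u. exp (k*u)/k"
  have A: "((?F \<circ> real_of_ereal) \<longlongrightarrow> 0) (at_right (-\<infinity>))"
    unfolding ereal_tendsto_simps using k by real_asymp
  have B: "((?F \<circ> real_of_ereal) \<longlongrightarrow> 1/k) (at_left (ereal 0))"
    unfolding ereal_tendsto_simps using k by (auto intro!: tendsto_eq_intros)
  have D: "DERIV ?F x :> exp (k*x)" for x using k by (auto intro!: derivative_eq_intros)
  note R = interval_integral_FTC_nonneg[of "-\<infinity>" "ereal 0" ?F "\<lambda>u. exp (k*u)", OF _ D _ _ A B]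
  have "set_integrable lborel (einterval (-\<infinity>) (ereal 0)) (\<lambda>u. exp (k*u))"
       "(LBINT u=-\<infinity>..ereal 0. exp (k*u)) = 1/k - 0"
    by (rule R; simp)+
  then show "integrable lborel (\<lambda>u. indicator {..<0} u * exp (k*u))"
    "(\<integral>u. indicator {..<0} u * exp (k*u) \<partial>lborel) = 1/k"
    by (simp_all add: set_integrable_def interval_lebesgue_integral_def set_lebesgue_integral_def)
qed

lemma P2: fixes k::real assumes k: "k>0"
  shows "integrable lborel (\<lambda>u. indicator {..<0} u * (u * exp (k*u)))"
    "(\<integral>u. indicator {..<0} u * (u * exp (k*u)) \<partial>lborel) = - 1/k^2"
proof -
  let ?F = "\<lambda>u. (1/k^2 - u/k) * exp (k*u)"
  have A: "((?F \<circ> real_of_ereal) \<longlongrightarrow> 0) (at_right (-\<infinity>))"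
    unfolding ereal_tendsto_simps using k by real_asymp
  have B: "((?F \<circ> real_of_ereal) \<longlongrightarrow> 1/k^2) (at_left (ereal 0))"
    unfolding ereal_tendsto_simps using k by (auto intro!: tendsto_eq_intros)
  have D: "DERIV ?F x :> - (x * exp (k*x))" for x using k
    by (auto intro!: derivative_eq_intros simp: field_simps power2_eq_square)
  note R = interval_integral_FTC_nonneg[of "-\<infinity>" "ereal 0" ?F "\<lambda>u. - (u * exp (k*u))", OF _ D _ _ A B]
  have I: "set_integrable lborel (einterval (-\<infinity>) (ereal 0)) (\<lambda>u. - (u * exp (k*u)))"
       "(LBINT u=-\<infinity>..ereal 0. - (u * exp (k*u))) = 1/k^2 - 0"
    by (rule R; simp add: mult_nonpos_nonneg)+
  have e: "(\<lambda>u. indicator {..<0} u * (u * exp (k*u))) = (\<lambda>u. - (indicator {..<0} u * (- (u * exp (k*u)))))"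
    by simp
  show "integrable lborel (\<lambda>u. indicator {..<0} u * (u * exp (k*u)))"
    using I(1) unfolding e
    by (intro integrable_minus) (simp add: set_integrable_def)
  show "(\<integral>u. indicator {..<0} u * (u * exp (k*u)) \<partial>lborel) = - 1/k^2"
    using I(2) unfolding e integral_minus
    by (simp add: interval_lebesgue_integral_def set_lebesgue_integral_def)
qed

lemma P3: fixes k y::real assumes k: "k>0"
  shows "integrable lborel (\<lambda>u. indicator {y<..} u * exp (-k*u))"
    "(\<integral>u. indicator {y<..} u * exp (-k*u) \<partial>lborel) = exp (-k*y)/k"
proof -
  let ?F = "\<lambda>u. - exp (-k*u)/k"
  have A: "((?F \<circ> real_of_ereal) \<longlongrightarrow> - exp (-k*y)/k) (at_right (ereal y))"
    unfolding ereal_tendsto_simps using k by (auto intro!: tendsto_eq_intros)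
  have B: "((?F \<circ> real_of_ereal) \<longlongrightarrow> 0) (at_left \<infinity>)"
    unfolding ereal_tendsto_simps using k by real_asymp
  have D: "DERIV ?F x :> exp (-k*x)" for x using k by (auto intro!: derivative_eq_intros)
  note R = interval_integral_FTC_nonneg[of "ereal y" "\<infinity>" ?F "\<lambda>u. exp (-k*u)", OF _ D _ _ A B]
  have "set_integrable lborel (einterval (ereal y) \<infinity>) (\<lambda>u. exp (-k*u))"
       "(LBINT u=ereal y..\<infinity>. exp (-k*u)) = 0 - (- exp (-k*y)/k)"
    by (rule R; simp)+
  then show "integrable lborel (\<lambda>u. indicator {y<..} u * exp (-k*u))"
    "(\<integral>u. indicator {y<..} u * exp (-k*u) \<partial>lborel) = exp (-k*y)/k"
    by (simp_all add: set_integrable_def interval_lebesgue_integral_def set_lebesgue_integral_def)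
qed

lemma P4: fixes k y::real assumes k: "k>0" and y: "y \<ge> 0"
  shows "integrable lborel (\<lambda>u. indicator {y<..} u * (u * exp (-k*u)))"
    "(\<integral>u. indicator {y<..} u * (u * exp (-k*u)) \<partial>lborel) = (y/k + 1/k^2) * exp (-k*y)"
proof -
  let ?F = "\<lambda>u. - (u/k + 1/k^2) * exp (-k*u)"
  have A: "((?F \<circ> real_of_ereal) \<longlongrightarrow> - (y/k + 1/k^2) * exp (-k*y)) (at_right (ereal y))"
    unfolding ereal_tendsto_simps using k by (auto intro!: tendsto_eq_intros)
  have B: "((?F \<circ> real_of_ereal) \<longlongrightarrow> 0) (at_left \<infinity>)"
    unfolding ereal_tendsto_simps using k by real_asymp
  have D: "DERIV ?F x :> x * exp (-k*x)" for x using k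
    by (auto intro!: derivative_eq_intros simp: field_simps power2_eq_square)
  note R = interval_integral_FTC_nonneg[of "ereal y" "\<infinity>" ?F "\<lambda>u. u * exp (-k*u)", OF _ D _ _ A B]
  have "set_integrable lborel (einterval (ereal y) \<infinity>) (\<lambda>u. u * exp (-k*u))"
       "(LBINT u=ereal y..\<infinity>. u * exp (-k*u)) = 0 - (- (y/k + 1/k^2) * exp (-k*y))"
    by (rule R; use y in \<open>auto\<close>)+
  then show "integrable lborel (\<lambda>u. indicator {y<..} u * (u * exp (-k*u)))"
    "(\<integral>u. indicator {y<..} u * (u * exp (-k*u)) \<partial>lborel) = (y/k + 1/k^2) * exp (-k*y)"
    by (simp_all add: set_integrable_def interval_lebesgue_integral_def set_lebesgue_integral_def algebra_simps)
qed

lemma P5: fixes c y::real assumes c: "c \<noteq> 0" and y: "y \<ge> 0"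
  shows "integrable lborel (\<lambda>u. indicator {0..y} u * exp (c*u))"
    "(\<integral>u. indicator {0..y} u * exp (c*u) \<partial>lborel) = (exp (c*y) - 1)/c"
proof -
  have ct: "continuous_on {0..y} (\<lambda>u. exp (c*u))" by (intro continuous_intros)
  show "integrable lborel (\<lambda>u. indicator {0..y} u * exp (c*u))"
    using borel_integrable_atLeastAtMost'[OF ct] by (simp add: set_integrable_def)
  have "integral\<^sup>L lborel (\<lambda>u. indicator {0..y} u *\<^sub>R exp (c*u)) = exp (c*y)/c - exp (c*0)/c"
    by (rule integral_FTC_atLeastAtMost[OF y _ ct])
      (use c in \<open>auto intro!: derivative_eq_intros simp: has_real_derivative_iff_has_vector_derivative[symmetric]\<close>)
  then show "(\<integral>u. indicator {0..y} u * exp (c*u) \<partial>lborel) = (exp (c*y) - 1)/c"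
    by (simp add: diff_divide_distrib)
qed

lemma P6: fixes c y::real assumes c: "c \<noteq> 0" and y: "y \<ge> 0"
  shows "integrable lborel (\<lambda>u. indicator {0..y} u * (u * exp (c*u)))"
    "(\<integral>u. indicator {0..y} u * (u * exp (c*u)) \<partial>lborel) = (y/c - 1/c^2) * exp (c*y) + 1/c^2"
proof -
  have ct: "continuous_on {0..y} (\<lambda>u. u * exp (c*u))" by (intro continuous_intros)
  show "integrable lborel (\<lambda>u. indicator {0..y} u * (u * exp (c*u)))"
    using borel_integrable_atLeastAtMost'[OF ct] by (simp add: set_integrable_def)
  have "integral\<^sup>L lborel (\<lambda>u. indicator {0..y} u *\<^sub>R (u * exp (c*u))) =
     (y/c - 1/c^2) * exp (c*y) - (0/c - 1/c^2) * exp (c*0)"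
    by (rule integral_FTC_atLeastAtMost[OF y _ ct])
      (use c in \<open>auto intro!: derivative_eq_intros simp: has_real_derivative_iff_has_vector_derivative[symmetric] field_simps power2_eq_square\<close>)
  then show "(\<integral>u. indicator {0..y} u * (u * exp (c*u)) \<partial>lborel) = (y/c - 1/c^2) * exp (c*y) + 1/c^2"
    by simp
qed

definition qf :: "real \<Rightarrow> real \<Rightarrow> real \<Rightarrow> real \<Rightarrow> real" where
  "qf a b y u = exp (- a * \<bar>u\<bar> - b * \<bar>y - u\<bar>)"

lemma q_split:
  fixes a b y u :: real assumes y: "y > 0"
  shows "qf a b y u = exp (-b*y) * (indicator {..<0} u * exp ((a+b)*u))
     + exp (-b*y) * (indicator {0..y} u * exp ((b-a)*u))
     + exp (b*y) * (indicator {y<..} u * exp (-(a+b)*u))"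
proof (cases "u < 0")
  case True
  then show ?thesis using y by (simp add: qf_def mult_exp_exp algebra_simps)
next
  case False
  show ?thesis
  proof (cases "u \<le> y")
    case True
    then show ?thesis using y False by (simp add: qf_def mult_exp_exp algebra_simps)
  next
    case F2: False
    then show ?thesis using y False by (simp add: qf_def mult_exp_exp algebra_simps)
  qed
qed

lemma uq_split:
  fixes a b y u :: real assumes y: "y > 0"
  shows "u * qf a b y u = exp (-b*y) * (indicator {..<0} u * (u * exp ((a+b)*u)))
     + exp (-b*y) * (indicator {0..y} u * (u * exp ((b-a)*u)))
     + exp (b*y) * (indicator {y<..} u * (u * exp (-(a+b)*u)))"
  unfolding q_split[OF y] by (simp add: algebra_simps)

lemma core:
  fixes a b y :: real assumes a: "a > 0" and b: "b > 0" and ab: "a \<noteq> b" and y: "y > 0"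
  shows "integrable lborel (qf a b y)"
    "(\<integral>u. qf a b y u \<partial>lborel) = exp (-b*y) * (1/(a+b) + (exp ((b-a)*y) - 1)/(b-a) + exp ((b-a)*y)/(a+b))"
    "integrable lborel (\<lambda>u. u * qf a b y u)"
    "(\<integral>u. u * qf a b y u \<partial>lborel) = exp (-b*y) * (- 1/(a+b)^2 + ((y/(b-a) - 1/(b-a)^2) * exp ((b-a)*y) + 1/(b-a)^2)
        + (y/(a+b) + 1/(a+b)^2) * exp ((b-a)*y))"
proof -
  have s: "a + b > 0" using a b by simp
  have c: "b - a \<noteq> 0" using ab by simp
  have yy: "y \<ge> 0" using y by simp
  have ee: "exp (b*y) * exp (-(a+b)*y) = exp (-b*y) * exp ((b-a)*y)"
    by (simp add: mult_exp_exp algebra_simps)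
  have ee2: "exp (b*y) * (exp (-(a+b)*y)/(a+b)) = exp (-b*y) * (exp ((b-a)*y)/(a+b))"
    using ee by (metis times_divide_eq_right)
  have ee3: "exp (b*y) * ((y/(a+b) + 1/(a+b)^2) * exp (-(a+b)*y)) = exp (-b*y) * ((y/(a+b) + 1/(a+b)^2) * exp ((b-a)*y))"
    using ee by (metis mult.left_commute)
  note I1 = P1[OF s] and I2 = P2[OF s] and I5 = P5[OF c yy] and I6 = P6[OF c yy]
    and I3 = P3[OF s, of y] and I4 = P4[OF s yy]
  have qe: "qf a b y = (\<lambda>u. exp (-b*y) * (indicator {..<0} u * exp ((a+b)*u))
     + exp (-b*y) * (indicator {0..y} u * exp ((b-a)*u))
     + exp (b*y) * (indicator {y<..} u * exp (-(a+b)*u)))"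
    using q_split[OF y] by (intro ext) simp
  have uqe: "(\<lambda>u. u * qf a b y u) = (\<lambda>u. exp (-b*y) * (indicator {..<0} u * (u * exp ((a+b)*u)))
     + exp (-b*y) * (indicator {0..y} u * (u * exp ((b-a)*u)))
     + exp (b*y) * (indicator {y<..} u * (u * exp (-(a+b)*u))))"
    using uq_split[OF y] by (intro ext) simp
  show "integrable lborel (qf a b y)"
    unfolding qe by (intro Bochner_Integration.integrable_add Bochner_Integration.integrable_mult_right I1(1) I3(1) I5(1))
  show "integrable lborel (\<lambda>u. u * qf a b y u)"
    unfolding uqe by (intro Bochner_Integration.integrable_add Bochner_Integration.integrable_mult_right I2(1) I4(1) I6(1))
  show "(\<integral>u. qf a b y u \<partial>lborel) = exp (-b*y) * (1/(a+b) + (exp ((b-a)*y) - 1)/(b-a) + exp ((b-a)*y)/(a+b))"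
    unfolding qe using I1 I3 I5
    apply (subst Bochner_Integration.integral_add, (intro Bochner_Integration.integrable_add Bochner_Integration.integrable_mult_right I1(1) I3(1) I5(1))+)+
    apply (simp only: integral_mult_right_zero I1(2) I3(2) I5(2) ee2)
    apply (simp only: distrib_left)
    done
  show "(\<integral>u. u * qf a b y u \<partial>lborel) = exp (-b*y) * (- 1/(a+b)^2 + ((y/(b-a) - 1/(b-a)^2) * exp ((b-a)*y) + 1/(b-a)^2)
        + (y/(a+b) + 1/(a+b)^2) * exp ((b-a)*y))"
    unfolding uqe using I2 I4 I6
    apply (subst Bochner_Integration.integral_add, (intro Bochner_Integration.integrable_add Bochner_Integration.integrable_mult_right I2(1) I4(1) I6(1))+)+
    apply (simp only: integral_mult_right_zero I2(2) I4(2) I6(2) ee3)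
    apply (simp only: distrib_left)
    done
qed

definition Zq where "Zq a b y = (\<integral>u. qf a b y u \<partial>lborel)"
definition Mq where "Mq a b y = (\<integral>u. u * qf a b y u \<partial>lborel)"

lemma gen_lim: fixes k d a b c :: real assumes "k>0" "d>0"
  shows "((\<lambda>u. (a + b* u) /(c + d * exp(k*u))) \<longlongrightarrow> 0) at_top"
  using assms by real_asymp

lemma E_lims: fixes c :: real assumes "c < 0"
  shows "((\<lambda>y. exp (c*y)) \<longlongrightarrow> 0) at_top" "((\<lambda>y. y * exp (c*y)) \<longlongrightarrow> 0) at_top"
  using assms by real_asymp+

lemma ratio_pos:
  fixes a b y :: real assumes a: "a > 0" and b: "b > 0" and ab: "a \<noteq> b" and y: "y > 0"
  shows "Mq a b y / Zq a b y = (- 1/(a+b)^2 + ((y/(b-a) - 1/(b-a)^2) * exp ((b-a)*y) + 1/(b-a)^2)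
        + (y/(a+b) + 1/(a+b)^2) * exp ((b-a)*y)) / (1/(a+b) + (exp ((b-a)*y) - 1)/(b-a) + exp ((b-a)*y)/(a+b))"
  unfolding Mq_def Zq_def core[OF a b ab y] by simp

lemma Zp_pos:
  fixes a b y :: real assumes a: "a > 0" and b: "b > 0" and ab: "a \<noteq> b" and y: "y > 0"
  shows "1/(a+b) + (exp ((b-a)*y) - 1)/(b-a) + exp ((b-a)*y)/(a+b) > 0"
proof -
  have "(exp ((b-a)*y) - 1)/(b-a) \<ge> 0"
  proof (cases "b > a")
    case True
    then have "exp ((b-a)*y) \<ge> 1" using y by simp
    then show ?thesis using True by simp
  next
    case False
    then have "b - a < 0" using ab by simp
    then have "exp ((b-a)*y) \<le> 1" using y by (simp add: mult_nonpos_nonneg)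
    then show ?thesis using \<open>b - a < 0\<close> by (simp add: divide_nonpos_neg)
  qed
  moreover have "1/(a+b) > 0" "exp ((b-a)*y)/(a+b) > 0" using a b by auto
  ultimately show ?thesis by linarith
qed

lemma Zq_pos:
  fixes a b y :: real assumes a: "a > 0" and b: "b > 0" and ab: "a \<noteq> b" and y: "y > 0"
  shows "Zq a b y > 0"
  unfolding Zq_def core[OF a b ab y] using Zp_pos[OF a b ab y] by simp

lemma LimA:
  fixes a b :: real assumes a: "a > 0" and b: "b > 0" and ab: "a < b"
  shows "((\<lambda>y. Mq a b y / Zq a b y - y + (1/(b-a) - 1/(a+b))) \<longlongrightarrow> 0) at_top"
proof -
  define c where "c = b - a"
  have abne: "a \<noteq> b" using ab by simp
  define s where "s = a + b"
  have c: "c > 0" and s: "s > 0" using a b ab by (auto simp: c_def s_def)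
  define \<alpha> where "\<alpha> = 1/c^2 - 1/s^2 - (1/c - 1/s)^2"
  define \<beta> where "\<beta> = 1/c - 1/s"
  define \<gamma> where "\<gamma> = 1/s - 1/c"
  define \<delta> where "\<delta> = 1/c + 1/s"
  have d: "\<delta> > 0" using c s unfolding \<delta>_def by (intro add_pos_pos) simp_all
  have "\<forall>\<^sub>F y in at_top. (\<alpha> + \<beta> * y) / (\<gamma> + \<delta> * exp (c*y)) = Mq a b y / Zq a b y - y + (1/(b-a) - 1/(a+b))"
    using eventually_gt_at_top[of 0]
  proof eventually_elim
    case (elim y)
    let ?E = "exp (c*y)"
    have Zp: "1/s + (?E - 1)/c + ?E/s > 0" using Zp_pos[OF a b _ elim] ab unfolding c_def s_def by simp
    have Zpe: "1/s + (?E - 1)/c + ?E/s = \<gamma> + \<delta> * ?E" unfolding \<gamma>_def \<delta>_def using c s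
      by (simp add: field_simps)
    have Ne: "(- 1/s^2 + ((y/c - 1/c^2) * ?E + 1/c^2) + (y/s + 1/s^2) * ?E)
        - y * (1/s + (?E - 1)/c + ?E/s) + (1/c - 1/s) * (1/s + (?E - 1)/c + ?E/s) = \<alpha> + \<beta> * y"
      unfolding \<alpha>_def \<beta>_def using c s by (simp add: field_simps power2_eq_square)
    have "Mq a b y / Zq a b y - y + (1/(b-a) - 1/(a+b)) =
       (- 1/s^2 + ((y/c - 1/c^2) * ?E + 1/c^2) + (y/s + 1/s^2) * ?E) / (1/s + (?E - 1)/c + ?E/s) - y + (1/c - 1/s)"
      unfolding ratio_pos[OF a b abne elim] using ab by (simp add: c_def s_def)
    also have "\<dots> = ((- 1/s^2 + ((y/c - 1/c^2) * ?E + 1/c^2) + (y/s + 1/s^2) * ?E)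
        - y * (1/s + (?E - 1)/c + ?E/s) + (1/c - 1/s) * (1/s + (?E - 1)/c + ?E/s)) / (1/s + (?E - 1)/c + ?E/s)"
      using Zp by (simp add: diff_divide_distrib add_divide_distrib)
    also have "\<dots> = (\<alpha> + \<beta> * y) / (\<gamma> + \<delta> * ?E)" unfolding Ne unfolding Zpe ..
    finally show ?case by simp
  qed
  from tendsto_cong[OF this] gen_lim[OF c d, of \<alpha> \<beta> \<gamma>] show ?thesis by simp
qed

lemma LimB:
  fixes a b :: real assumes a: "a > 0" and b: "b > 0" and ab: "b < a"
  shows "((\<lambda>y. Mq a b y / Zq a b y + (1/(b-a) + 1/(a+b))) \<longlongrightarrow> 0) at_top"
proof -
  define c where "c = b - a"
  have abne: "a \<noteq> b" using ab by simp
  define s where "s = a + b"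
  have c: "c < 0" and s: "s > 0" using a b ab by (auto simp: c_def s_def)
  define \<gamma> where "\<gamma> = 1/s - 1/c"
  define \<delta> where "\<delta> = 1/c + 1/s"
  have "1/c < 0" "1/s > 0" using c s by simp_all
  then have g: "\<gamma> > 0" unfolding \<gamma>_def by linarith
  have "\<forall>\<^sub>F y in at_top. ((1/c^2 - 1/s^2) + \<delta> * (y * exp (c*y)) + (1/s^2 - 1/c^2) * exp (c*y)) / (\<gamma> + \<delta> * exp (c*y)) + \<delta>
       = Mq a b y / Zq a b y + (1/(b-a) + 1/(a+b))"
    using eventually_gt_at_top[of 0]
  proof eventually_elim
    case (elim y)
    let ?E = "exp (c*y)"
    have Zpe: "1/s + (?E - 1)/c + ?E/s = \<gamma> + \<delta> * ?E" unfolding \<gamma>_def \<delta>_def using c s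
      by (simp add: field_simps)
    have Mpe: "- 1/s^2 + ((y/c - 1/c^2) * ?E + 1/c^2) + (y/s + 1/s^2) * ?E
       = (1/c^2 - 1/s^2) + \<delta> * (y * ?E) + (1/s^2 - 1/c^2) * ?E"
      unfolding \<delta>_def using c s by (simp add: field_simps power2_eq_square)
    show ?case
      unfolding ratio_pos[OF a b abne elim] c_def[symmetric] s_def[symmetric] Mpe Zpe
      by (simp add: \<delta>_def)
  qed
  moreover have "((\<lambda>y. ((1/c^2 - 1/s^2) + \<delta> * (y * exp (c*y)) + (1/s^2 - 1/c^2) * exp (c*y)) / (\<gamma> + \<delta> * exp (c*y)) + \<delta>)
     \<longlongrightarrow> ((1/c^2 - 1/s^2) + \<delta> * 0 + (1/s^2 - 1/c^2) * 0) / (\<gamma> + \<delta> * 0) + \<delta>) at_top"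
    using g by (intro tendsto_intros E_lims[OF c]) simp
  moreover have "((1/c^2 - 1/s^2) + \<delta> * 0 + (1/s^2 - 1/c^2) * 0) / (\<gamma> + \<delta> * 0) + \<delta> = 0"
    unfolding \<gamma>_def \<delta>_def using c s by (simp add: field_simps power2_eq_square)
  ultimately show ?thesis using tendsto_cong by force
qed

lemma qf_refl: "qf a b (-y) (0 + -1 * u) = qf a b y u"
  by (simp add: qf_def abs_minus_commute)

lemma int_refl:
  assumes "integrable lborel (qf a b (-y))" "integrable lborel (\<lambda>u. u * qf a b (-y) u)"
  shows "integrable lborel (qf a b y)" "integrable lborel (\<lambda>u. u * qf a b y u)"
proof -
  have "integrable lborel (\<lambda>x. qf a b (-y) (0 + -1 * x))"
    using lborel_integrable_real_affine_iff[of "-1" "qf a b (-y)" 0] assms(1) by simp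
  then show "integrable lborel (qf a b y)" unfolding qf_refl by simp
  have "integrable lborel (\<lambda>x. (0 + -1 * x) * qf a b (-y) (0 + -1 * x))"
    using lborel_integrable_real_affine_iff[of "-1" "\<lambda>u. u * qf a b (-y) u" 0] assms(2) by simp
  then have "integrable lborel (\<lambda>x. - (x * qf a b y x))" unfolding qf_refl by simp
  then show "integrable lborel (\<lambda>u. u * qf a b y u)" by simp
qed

lemma Zq_refl: "Zq a b (-y) = Zq a b y"
  unfolding Zq_def
  by (subst lborel_integral_real_affine[where c="-1" and t=0]) (simp_all only: qf_refl, simp_all)

lemma Mq_refl: "Mq a b (-y) = - Mq a b y"
proof -
  have "Mq a b (-y) = \<bar>-1\<bar> *\<^sub>R (\<integral>x. (0 + -1 * x) * qf a b (-y) (0 + -1 * x) \<partial>lborel)"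
    unfolding Mq_def by (rule lborel_integral_real_affine) simp
  also have "\<dots> = (\<integral>x. - (x * qf a b y x) \<partial>lborel)" unfolding qf_refl by simp
  also have "\<dots> = - Mq a b y" unfolding Mq_def by (rule integral_minus)
  finally show ?thesis .
qed

lemma int_all:
  fixes a b y :: real assumes a: "a > 0" and b: "b > 0" and ab: "a \<noteq> b" and y: "y \<noteq> 0"
  shows "integrable lborel (qf a b y)" "integrable lborel (\<lambda>u. u * qf a b y u)" "Zq a b y > 0"
proof -
  have "(integrable lborel (qf a b y) \<and> integrable lborel (\<lambda>u. u * qf a b y u)) \<and> Zq a b y > 0"
  proof (cases "y > 0")
    case True
    then show ?thesis using core[OF a b ab True] Zq_pos[OF a b ab True] by simp
  next
    case False
    then have "-y > 0" using y by simp
    then show ?thesis using core[OF a b ab \<open>-y > 0\<close>] Zq_pos[OF a b ab \<open>-y > 0\<close>]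
      int_refl[of a b y] Zq_refl[of a b y] by simp
  qed
  then show "integrable lborel (qf a b y)" "integrable lborel (\<lambda>u. u * qf a b y u)" "Zq a b y > 0"
    by auto
qed

lemma dens:
  fixes s0 se :: real assumes "s0 > 0" "se > 0"
  shows "laplace_density theta0 s0 t * laplace_density 0 se (x - t)
      = qf (1/s0) (1/se) (x - theta0) (t - theta0) / (4 * s0 * se)"
  using assms by (simp add: laplace_density_def qf_def mult_exp_exp field_simps)

lemma pm_shift:
  fixes s0 se :: real assumes s0: "s0 > 0" and se: "se > 0" and ne: "s0 \<noteq> se"
    and y: "x - theta0 \<noteq> 0"
  shows "posterior_mean theta0 s0 se x = theta0 + Mq (1/s0) (1/se) (x - theta0) / Zq (1/s0) (1/se) (x - theta0)"
proof -
  define a where "a = 1/s0"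
  define b where "b = 1/se"
  define y where "y = x - theta0"
  define K where "K = 4 * s0 * se"
  have a: "a > 0" and b: "b > 0" and ab: "a \<noteq> b" using s0 se ne by (auto simp: a_def b_def)
  have K: "K > 0" using s0 se by (simp add: K_def)
  note I = int_all[OF a b ab y[folded y_def]]
  have num: "(\<integral>t. t * laplace_density theta0 s0 t * laplace_density 0 se (x - t) \<partial>lborel)
     = (theta0 * Zq a b y + Mq a b y) / K"
  proof -
    have "(\<integral>t. t * laplace_density theta0 s0 t * laplace_density 0 se (x - t) \<partial>lborel)
       = (\<integral>t. t * (qf a b y (t - theta0) / K) \<partial>lborel)"
      by (rule Bochner_Integration.integral_cong) (simp_all add: mult.assoc dens[OF s0 se] a_def b_def y_def K_def)
    also have "\<dots> = \<bar>1\<bar> *\<^sub>R (\<integral>u. (theta0 + 1 * u) * (qf a b y (theta0 + 1 * u - theta0) / K) \<partial>lborel)"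
      by (rule lborel_integral_real_affine) simp
    also have "\<dots> = (\<integral>u. (theta0 * qf a b y u + u * qf a b y u) / K \<partial>lborel)"
      by (simp add: algebra_simps add_divide_distrib)
    also have "\<dots> = (theta0 * Zq a b y + Mq a b y) / K"
      using I by (simp add: Zq_def Mq_def)
    finally show ?thesis .
  qed
  have den: "(\<integral>t. laplace_density theta0 s0 t * laplace_density 0 se (x - t) \<partial>lborel)
     = Zq a b y / K"
  proof -
    have "(\<integral>t. laplace_density theta0 s0 t * laplace_density 0 se (x - t) \<partial>lborel)
       = (\<integral>t. qf a b y (t - theta0) / K \<partial>lborel)"
      by (rule Bochner_Integration.integral_cong) (simp_all add: dens[OF s0 se] a_def b_def y_def K_def)
    also have "\<dots> = \<bar>1\<bar> *\<^sub>R (\<integral>u. qf a b y (theta0 + 1 * u - theta0) / K \<partial>lborel)"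
      by (rule lborel_integral_real_affine) simp
    also have "\<dots> = Zq a b y / K"
      by (simp add: Zq_def)
    finally show ?thesis .
  qed
  show ?thesis
    unfolding posterior_mean_def num den using I(3) K
    by (simp add: field_simps a_def[symmetric] b_def[symmetric] y_def[symmetric])
qed

theorem mainTheorem13:
  fixes sigma0 sigmae theta0 :: real
  assumes "sigma0 > 0" and "sigmae > 0" and "sigma0 \<noteq> sigmae"
  defines "xstar \<equiv> (2 / sigma0) / (1 / sigmae ^ 2 - 1 / sigma0 ^ 2)"
  shows "(sigma0 > sigmae \<longrightarrow>
           ((\<lambda>x. posterior_mean theta0 sigma0 sigmae x - (x - sgn (x - theta0) * xstar))
              \<longlongrightarrow> 0) at_infinity)
       \<and> (sigma0 < sigmae \<longrightarrow>
           ((\<lambda>x. (posterior_mean theta0 sigma0 sigmae x - theta0)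
                  - (- sgn (x - theta0) * (sigma0 / sigmae) * xstar))
              \<longlongrightarrow> 0) at_infinity)"
proof -
  define a where "a = 1/sigma0"
  define b where "b = 1/sigmae"
  have a: "a > 0" and b: "b > 0" and ab: "a \<noteq> b" using assms(1-3) by (auto simp: a_def b_def)
  have s0: "sigma0 = 1/a" and se: "sigmae = 1/b" by (simp_all add: a_def b_def)
  have xs0: "xstar = 2*a/(b^2 - a^2)" unfolding xstar_def s0 se by (simp add: power_one_over)
  have bma: "b - a \<noteq> 0" "a + b \<noteq> 0" "b^2 - a^2 \<noteq> 0" using a b ab
    by (auto simp: power2_eq_square square_eq_iff)
  have xs: "xstar = 1/(b-a) - 1/(a+b)" unfolding xs0 using bma
    by (simp add: field_simps power2_eq_square)
  have xs2: "(sigma0 / sigmae) * xstar = 1/(b-a) + 1/(a+b)" unfolding xs0 s0 se using bma a b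
    by (simp add: field_simps power2_eq_square)
  define P where "P = (\<lambda>y. Mq a b y / Zq a b y)"
  have Prefl: "P (-y) = - P y" for y unfolding P_def Zq_refl Mq_refl by simp
  have PM: "posterior_mean theta0 sigma0 sigmae x = theta0 + P (x - theta0)" if "x \<noteq> theta0" for x
    using pm_shift[OF assms(1-3), of x theta0] that by (simp add: P_def a_def b_def)
  have top: "filterlim (\<lambda>x. x - theta0) at_top at_top" by real_asymp
  have bot: "filterlim (\<lambda>x. theta0 - x) at_top at_bot" by real_asymp
  have ev_top: "\<forall>\<^sub>F x in at_top. x > theta0" by (rule eventually_gt_at_top)
  have ev_bot: "\<forall>\<^sub>F x in at_bot. x < theta0" by (rule eventually_gt_at_bot)
  show ?thesis
  proof (intro conjI impI)
    assume "sigma0 > sigmae"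
    then have "a < b" using a b by (simp add: s0 se field_simps)
    let ?H = "\<lambda>y. P y - y + xstar"
    have H: "(?H \<longlongrightarrow> 0) at_top" using LimA[OF a b \<open>a < b\<close>] unfolding xs P_def .
    let ?G = "\<lambda>x. posterior_mean theta0 sigma0 sigmae x - (x - sgn (x - theta0) * xstar)"
    have "(?G \<longlongrightarrow> 0) at_top"
    proof (rule Lim_transform_eventually)
      show "((\<lambda>x. ?H (x - theta0)) \<longlongrightarrow> 0) at_top" by (rule filterlim_compose[OF H top])
      show "\<forall>\<^sub>F x in at_top. ?H (x - theta0) = ?G x" using ev_top
        by eventually_elim (simp add: PM)
    qed
    moreover have "(?G \<longlongrightarrow> 0) at_bot"
    proof (rule Lim_transform_eventually)
      show "((\<lambda>x. - ?H (theta0 - x)) \<longlongrightarrow> 0) at_bot"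
        using tendsto_minus[OF filterlim_compose[OF H bot]] by simp
      show "\<forall>\<^sub>F x in at_bot. - ?H (theta0 - x) = ?G x" using ev_bot
      proof eventually_elim
        case (elim x)
        have "P (x - theta0) = - P (theta0 - x)" using Prefl[of "theta0 - x"] by simp
        then show ?case using elim by (simp add: PM)
      qed
    qed
    ultimately show "(?G \<longlongrightarrow> 0) at_infinity"
      unfolding at_infinity_eq_at_top_bot by (rule filterlim_sup)
  next
    assume "sigma0 < sigmae"
    then have "b < a" using a b by (simp add: s0 se field_simps)
    let ?H = "\<lambda>y. P y + (sigma0 / sigmae) * xstar"
    have H: "(?H \<longlongrightarrow> 0) at_top" using LimB[OF a b \<open>b < a\<close>] unfolding xs2 P_def .
    let ?G = "\<lambda>x. (posterior_mean theta0 sigma0 sigmae x - theta0)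
                  - (- sgn (x - theta0) * (sigma0 / sigmae) * xstar)"
    have "(?G \<longlongrightarrow> 0) at_top"
    proof (rule Lim_transform_eventually)
      show "((\<lambda>x. ?H (x - theta0)) \<longlongrightarrow> 0) at_top" by (rule filterlim_compose[OF H top])
      show "\<forall>\<^sub>F x in at_top. ?H (x - theta0) = ?G x" using ev_top
        by eventually_elim (simp add: PM)
    qed
    moreover have "(?G \<longlongrightarrow> 0) at_bot"
    proof (rule Lim_transform_eventually)
      show "((\<lambda>x. - ?H (theta0 - x)) \<longlongrightarrow> 0) at_bot"
        using tendsto_minus[OF filterlim_compose[OF H bot]] by simp
      show "\<forall>\<^sub>F x in at_bot. - ?H (theta0 - x) = ?G x" using ev_bot
      proof eventually_elim
        case (elim x)
        have "P (x - theta0) = - P (theta0 - x)" using Prefl[of "theta0 - x"] by simp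
        then show ?case using elim by (simp add: PM)
      qed
    qed
    ultimately show "(?G \<longlongrightarrow> 0) at_infinity"
      unfolding at_infinity_eq_at_top_bot by (rule filterlim_sup)
  qed
qed
end
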